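(* Let $1\le m\le k-1$, $K=\{1,\dots,k\}$, $T\subseteq K$ with $|T|=m$, and let $\mathcal{V}=\{\bm v_1,\dots,\bm v_{m-1}\}$ be $m-1$ distinct points of $PG(k-1,q)$ with $\mathrm{supp}(\bm v_i)\cap T=\emptyset$ for all $i$. If $m\le q^{k-m-1}$, then $M=X^T\cup Y^T_{\mathcal V}\cup Z^T$ is a minimal $(k-m)$-block over $\mathbb{F}_q$.
   Context: Points of $PG(k-1,q)$ are one-dimensional subspaces of $\mathbb{F}_q^k$, identified with any nonzero representing vector; the support $\mathrm{supp}(\bm x)=\{i:x_i\neq0\}$ of a point is well defined. $\bm e_i$ denotes the $i$-th standard unit vector of $\mathbb{F}_q^k$. Define $X^T=\{\bm x\in PG(k-1,q): \mathrm{supp}(\bm x)\cap T=\emptyset\}$; $Y^T_{\mathcal V}=\{\bm x\in PG(k-1,q): |\mathrm{supp}(\bm x)\cap T|=1\}$ minus all points represented by $\bm v_i+\lambda\bm e_j$ with $\bm v_i\in\mathcal V$, $j\in T$, $\lambda\in\mathbb{F}_q\setminus\{0\}$; $Z^T=\{\bm x\in PG(k-1,q): \mathrm{supp}(\bm x)\text{ is a 2-element subset of }T\}$. For $1\le r\le k-1$, a set $M$ of points of $PG(k-1,q)$ is an $r$-block if every $(k-r)$-dimensional linear subspace of $\mathbb{F}_q^k$ contains at least one point of $M$. A tangent of a point $\bm x\in M$ is a $(k-r)$-dimensional linear subspace $U$ of $\mathbb{F}_q^k$ whose set of points meets $M$ exactly in $\{\bm x\}$. An $r$-block $M$ is minimal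 if every point of $M$ has a tangent. *)

theory Defs
  imports "HOL-Analysis.Analysis"
begin

text \<open>Vectors of F_q^k are elements of 'a^'k, where 'a is a finite field (q = CARD('a))
and 'k a finite index type (k = CARD('k), K = UNIV).\<close>

definition proj_point :: "('a::field)^'k \<Rightarrow> ('a^'k) set" where
  "proj_point x = vec.span {x}"

definition PG :: "(('a::field)^'k) set set" where
  "PG = {proj_point x | x. x \<noteq> 0}"

text \<open>support of a vector, and of a point (the same for every nonzero representative)\<close>
definition supp :: "('a::zero)^'k \<Rightarrow> 'k set" where
  "supp x = {i. x $ i \<noteq> 0}"

definition supp_pt :: "(('a::zero)^'k) set \<Rightarrow> 'k set" where
  "supp_pt p = (\<Union>x\<in>p. supp x)"

text \<open>e_i = axis i 1\<close>

definition X_set :: "'k set \<Rightarrow> (('a::field)^'k) set set" where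
  "X_set T = {p \<in> PG. supp_pt p \<inter> T = {}}"

definition Y_set :: "'k set \<Rightarrow> (('a::field)^'k) set set \<Rightarrow> (('a::field)^'k) set set" where
  "Y_set T V = {p \<in> PG. card (supp_pt p \<inter> T) = 1}
     - {proj_point (v + c *s axis j 1) | v j c. v \<noteq> 0 \<and> proj_point v \<in> V \<and> j \<in> T \<and> c \<noteq> 0}"

definition Z_set :: "'k set \<Rightarrow> (('a::field)^'k) set set" where
  "Z_set T = {p \<in> PG. card (supp_pt p) = 2 \<and> supp_pt p \<subseteq> T}"

text \<open>A point p lies in a linear subspace U iff p \<subseteq> U.\<close>

definition is_r_block :: "nat \<Rightarrow> (('a::field)^'k) set set \<Rightarrow> bool" where
  "is_r_block r M \<longleftrightarrow> M \<subseteq> PG \<and> 1 \<le> r \<and> r \<le> CARD('k) - 1 \<and>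
     (\<forall>U. vec.subspace U \<and> vec.dim U = CARD('k) - r \<longrightarrow> (\<exists>p\<in>M. p \<subseteq> U))"

definition is_tangent :: "nat \<Rightarrow> (('a::field)^'k) set set \<Rightarrow> ('a^'k) set \<Rightarrow> ('a^'k) set \<Rightarrow> bool" where
  "is_tangent r M x U \<longleftrightarrow> vec.subspace U \<and> vec.dim U = CARD('k) - r \<and>
     {p \<in> M. p \<subseteq> U} = {x}"

definition is_minimal_r_block :: "nat \<Rightarrow> (('a::field)^'k) set set \<Rightarrow> bool" where
  "is_minimal_r_block r M \<longleftrightarrow> is_r_block r M \<and> (\<forall>x\<in>M. \<exists>U. is_tangent r M x U)"

end

theory Submission
  imports Defs
begin


lemma pp_eq: "proj_point x = range (\<lambda>c. c *s x)"
  by (simp add: proj_point_def vec.span_singleton)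

lemma in_pp: "x \<in> proj_point x"
  unfolding pp_eq by (metis rangeI vector_smult_lid)

lemma supp_scale: fixes x :: "'a::field^'k" shows "c \<noteq> 0 \<Longrightarrow> supp (c *s x) = supp x"
  by (auto simp: supp_def)

lemma supp_pt_pp: "x \<noteq> 0 \<Longrightarrow> supp_pt (proj_point x) = supp x"
  unfolding supp_pt_def pp_eq
proof (intro equalityI subsetI)
  fix i assume "i \<in> (\<Union>y\<in>range (\<lambda>c. c *s x). supp y)"
  then show "i \<in> supp x" by (auto simp: supp_def)
next
  fix i assume "i \<in> supp x"
  then show "i \<in> (\<Union>y\<in>range (\<lambda>c. c *s x). supp y)"
    using rangeI[of "\<lambda>c. c *s x" 1] by (intro UN_I[of "1 *s x"]) auto
qed

lemma pp_scale: "c \<noteq> 0 \<Longrightarrow> proj_point (c *s x) = proj_point x"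
  unfolding pp_eq
proof (intro equalityI subsetI)
  fix y assume c: "c \<noteq> 0" and "y \<in> range (\<lambda>d. d *s (c *s x))"
  then obtain d where "y = d *s (c *s x)" by auto
  then show "y \<in> range (\<lambda>d. d *s x)" using rangeI[of "\<lambda>d. d *s x" "d*c"] by (simp add: vector_smult_assoc)
next
  fix y assume c: "c \<noteq> 0" and "y \<in> range (\<lambda>d. d *s x)"
  then obtain d where "y = d *s x" by auto
  then have "y = (d / c) *s (c *s x)" using c by (simp add: vector_smult_assoc)
  then show "y \<in> range (\<lambda>d. d *s (c *s x))" by blast
qed

lemma pp_eqD: assumes "proj_point x = proj_point y" "x \<noteq> 0"
  shows "\<exists>c. c \<noteq> 0 \<and> x = c *s y"
proof -
  have "x \<in> proj_point y" using assms in_pp by metis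
  then obtain c where "x = c *s y" unfolding pp_eq by auto
  then show ?thesis using assms(2) by (metis vector_smult_lzero)
qed

lemma pp_sub: "vec.subspace U \<Longrightarrow> proj_point x \<subseteq> U \<longleftrightarrow> x \<in> U"
  unfolding pp_eq using in_pp[of x] unfolding pp_eq
  by (auto intro: vec.subspace_scale)

lemma PG_E: "p \<in> PG \<Longrightarrow> \<exists>x. x \<noteq> 0 \<and> p = proj_point x"
  by (auto simp: PG_def)

lemma pp_PG: "x \<noteq> 0 \<Longrightarrow> proj_point x \<in> PG"
  by (auto simp: PG_def)

lemma supp_iff: "i \<in> supp x \<longleftrightarrow> x $ i \<noteq> 0"
  by (simp add: supp_def)

lemma ax: "axis i (1::'a::field) $ t = (if t = i then 1 else 0)"
  by (simp add: axis_def)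

lemma pt_X: fixes z :: "'a::field^'k"
  shows "z \<noteq> 0 \<Longrightarrow> proj_point z \<in> X_set T \<longleftrightarrow> supp z \<inter> T = {}"
  by (simp add: X_set_def supp_pt_pp pp_PG)

lemma pt_Z: fixes z :: "'a::field^'k"
  shows "z \<noteq> 0 \<Longrightarrow> proj_point z \<in> Z_set T \<longleftrightarrow> card (supp z) = 2 \<and> supp z \<subseteq> T"
  by (simp add: Z_set_def supp_pt_pp pp_PG)

lemma sc: "(x::'a::field) - e = a*(y - f) \<Longrightarrow> x - a*y = e - a*f"
  by (simp add: algebra_simps)

lemma block:
  fixes T :: "'k::finite set" and V :: "('a::field^'k) set set" and U :: "('a^'k) set"
  assumes cT: "card T = m" and m1: "1 \<le> m" and fV: "finite V" and cV: "card V = m - 1"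
    and Vd: "\<forall>v\<in>V. supp_pt v \<inter> T = {}" and sU: "vec.subspace U" and dU: "vec.dim U = m"
  shows "\<exists>p \<in> X_set T \<union> Y_set T V \<union> Z_set T. p \<subseteq> U"
proof (cases "\<exists>z\<in>U. z \<noteq> 0 \<and> (\<forall>i\<in>T. z$i = 0)")
  case True
  then obtain z where z: "z \<in> U" "z \<noteq> 0" "\<forall>i\<in>T. z$i = 0" by blast
  then have "proj_point z \<in> X_set T" by (subst pt_X) (auto simp: supp_def)
  then show ?thesis using z pp_sub[OF sU] by blast
next
  case False
  define P where "P = (\<lambda>z::'a^'k. \<chi> i. if i \<in> T then z$i else 0)"
  have linP: "Vector_Spaces.linear (*s) (*s) P"
    by unfold_locales (auto simp: P_def vec_eq_iff)
  have injP: "inj_on P U"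
  proof (rule inj_onI)
    fix x y assume xy: "x \<in> U" "y \<in> U" "P x = P y"
    have "x - y \<in> U" using xy sU by (simp add: vec.subspace_diff)
    moreover have "\<forall>i\<in>T. (x - y)$i = 0"
    proof
      fix i assume "i \<in> T"
      then have "P x $ i = P y $ i" using xy by simp
      then show "(x - y)$i = 0" using \<open>i \<in> T\<close> by (simp add: P_def)
    qed
    ultimately show "x = y" using False by auto
  qed
  have dimPU: "vec.dim (P ` U) = m"
  proof -
    have "vec.span U = U" using sU by (simp add: vec.span_eq_iff)
    then show ?thesis using vec.dim_image_eq[OF linP, of U] injP dU by metis
  qed
  define S where "S = {z::'a^'k. \<forall>i. i \<notin> T \<longrightarrow> z$i = 0}"
  have SS: "S \<subseteq> vec.span ((\<lambda>i. axis i 1) ` T)"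
  proof
    fix z assume "z \<in> S"
    then have "z = (\<Sum>i\<in>T. z$i *s axis i 1)"
      by (auto simp: vec_eq_iff sum_component ax S_def if_distrib sum.delta cong: if_cong)
    moreover have "(\<Sum>i\<in>T. z$i *s axis i 1) \<in> vec.span ((\<lambda>i. axis i 1) ` T)"
      by (intro vec.span_sum vec.span_scale vec.span_base) auto
    ultimately show "z \<in> vec.span ((\<lambda>i. axis i 1) ` T)" by simp
  qed
  have "vec.dim S \<le> card ((\<lambda>i. axis i (1::'a)) ` T)"
    by (rule vec.dim_le_card[OF SS]) simp
  also have "\<dots> \<le> m" using cT card_image_le[of T] by simp
  finally have dS: "vec.dim S \<le> vec.dim (P ` U)" using dimPU by simp
  have PUS: "P ` U \<subseteq> S" by (auto simp: P_def S_def)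
  have spEq: "vec.span (P ` U) = vec.span S" by (rule vec.dim_eq_span[OF PUS dS])
  have subPU: "vec.subspace (P ` U)" by (rule vec.linear_subspace_image[OF linP sU])
  have "\<forall>j\<in>T. \<exists>y. y \<in> U \<and> P y = axis j 1"
  proof
    fix j assume j: "j \<in> T"
    have "axis j 1 \<in> S" using j by (auto simp: S_def ax)
    then have "axis j 1 \<in> vec.span (P ` U)" using spEq vec.span_base by blast
    then have "axis j 1 \<in> P ` U" using subPU by (metis vec.span_eq_iff)
    then show "\<exists>y. y \<in> U \<and> P y = axis j 1" by (metis imageE)
  qed
  then obtain y where y: "\<forall>j\<in>T. y j \<in> U \<and> P (y j) = axis j 1" by metis
  have yT: "\<forall>j\<in>T. \<forall>i\<in>T. y j $ i = (if i = j then 1 else 0)"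
  proof (intro ballI)
    fix j i assume j: "j \<in> T" and i: "i \<in> T"
    have "P (y j) $ i = axis j (1::'a) $ i" using y j by simp
    then show "y j $ i = (if i = j then 1 else 0)" using i by (simp add: P_def ax)
  qed
  show ?thesis
  proof (cases "\<exists>j\<in>T. proj_point (y j) \<in> Y_set T V")
    case True
    then show ?thesis using y pp_sub[OF sU] by blast
  next
    case False
    have r: "y j - axis j 1 \<noteq> 0 \<and> proj_point (y j - axis j 1) \<in> V" if j: "j \<in> T" for j
    proof -
      have sj: "supp (y j) \<inter> T = {j}" using yT j by (auto simp: supp_def split: if_splits)
      have yj0: "y j \<noteq> 0" using yT j by (metis zero_index zero_neq_one)
      have "proj_point (y j) \<in> {p \<in> PG. card (supp_pt p \<inter> T) = 1}"
        using sj yj0 by (simp add: supp_pt_pp pp_PG)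
      then have "proj_point (y j) \<in> {proj_point (v + c *s axis j 1) | v j c. v \<noteq> 0 \<and> proj_point v \<in> V \<and> j \<in> T \<and> c \<noteq> 0}"
        using False j unfolding Y_set_def by blast
      then obtain v j' c where vjc: "proj_point (y j) = proj_point (v + c *s axis j' 1)" "v \<noteq> 0"
        "proj_point v \<in> V" "j' \<in> T" "c \<noteq> 0" by blast
      obtain a where a: "a \<noteq> 0" "y j = a *s (v + c *s axis j' 1)" using pp_eqD[OF vjc(1) yj0] by blast
      have vT: "\<forall>i\<in>T. v $ i = 0" using Vd vjc(3) supp_pt_pp[OF vjc(2)] by (auto simp: supp_def)
      have "y j $ j = 1" using yT j by simp
      then have "a * (v$j + c * axis j' 1 $ j) = 1" using a by (simp add: distrib_left mult.assoc)
      then have jj: "j' = j" and ac: "a * c = 1" using vT j by (auto simp: ax split: if_splits)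
      have "y j - axis j 1 = a *s v"
        using a vT j jj ac by (auto simp: vec_eq_iff ax algebra_simps)
      then show ?thesis using a vjc pp_scale[of a v] by simp
    qed
    define h where "h j = proj_point (y j - axis j 1)" for j
    have "\<not> inj_on h T"
    proof
      assume "inj_on h T"
      moreover have "h ` T \<subseteq> V" using r by (auto simp: h_def)
      ultimately have "card T \<le> card V" using card_inj_on_le fV by blast
      then show False using cT cV m1 by simp
    qed
    then obtain j j' where jj: "j \<in> T" "j' \<in> T" "j \<noteq> j'" "h j' = h j"
      unfolding inj_on_def by blast
    have rr: "proj_point (y j' - axis j' 1) = proj_point (y j - axis j 1)" "y j' - axis j' 1 \<noteq> 0"
      using jj r unfolding h_def by auto
    obtain a where a: "a \<noteq> 0" "y j' - axis j' 1 = a *s (y j - axis j 1)"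
      using pp_eqD[OF rr] by blast
    define z where "z = y j' - a *s y j"
    have zU: "z \<in> U" using y jj sU unfolding z_def by (simp add: vec.subspace_diff vec.subspace_scale)
    have z: "z = axis j' 1 - a *s axis j 1"
    proof -
      have "(y j' - axis j' 1) $ i = (a *s (y j - axis j 1)) $ i" for i using a(2) by simp
      then have "y j' $ i - axis j' 1 $ i = a * (y j $ i - axis j 1 $ i)" for i by (simp add: right_diff_distrib)
      then have "y j' $ i - a * y j $ i = axis j' 1 $ i - a * axis j 1 $ i" for i
        using sc by blast
      then show ?thesis unfolding z_def by (simp add: vec_eq_iff)
    qed
    have sz: "supp z = {j, j'}" using jj a(1) by (auto simp: z supp_def ax)
    have z0: "z \<noteq> 0" using sz by (auto simp: supp_def)
    have "proj_point z \<in> Z_set T" using z0 sz jj by (simp add: pt_Z)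
    then show ?thesis using zU pp_sub[OF sU] by blast
  qed
qed


lemma span_idx:
  fixes b :: "'j \<Rightarrow> 'a::field^'k"
  assumes fT: "finite T" and inj: "inj_on b T"
  shows "vec.span (b ` T) = {z. \<exists>c. z = (\<Sum>i\<in>T. c i *s b i)}"
proof -
  have "vec.span (b ` T) = range (\<lambda>u. \<Sum>v\<in>b ` T. u v *s v)"
    using fT by (simp add: vec.span_finite)
  also have "\<dots> = range (\<lambda>u. \<Sum>i\<in>T. u (b i) *s b i)"
    by (simp add: sum.reindex[OF inj])
  also have "\<dots> = {z. \<exists>c. z = (\<Sum>i\<in>T. c i *s b i)}"
  proof (intro equalityI subsetI)
    fix z assume "z \<in> range (\<lambda>u. \<Sum>i\<in>T. u (b i) *s b i)"
    then show "z \<in> {z. \<exists>c. z = (\<Sum>i\<in>T. c i *s b i)}" by auto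
  next
    fix z assume "z \<in> {z. \<exists>c. z = (\<Sum>i\<in>T. c i *s b i)}"
    then obtain c where z: "z = (\<Sum>i\<in>T. c i *s b i)" by auto
    have "z = (\<Sum>i\<in>T. (\<lambda>v. c (inv_into T b v)) (b i) *s b i)"
      unfolding z by (rule sum.cong) (auto simp: inv_into_f_f[OF inj])
    then show "z \<in> range (\<lambda>u. \<Sum>i\<in>T. u (b i) *s b i)"
      using rangeI[of "\<lambda>u. \<Sum>i\<in>T. u (b i) *s b i" "\<lambda>v. c (inv_into T b v)"] by simp
  qed
  finally show ?thesis .
qed

lemma dim_idx:
  fixes b :: "'j \<Rightarrow> 'a::field^'k"
  assumes fT: "finite T" and inj: "inj_on b T"
    and ind: "\<And>c. (\<Sum>i\<in>T. c i *s b i) = 0 \<Longrightarrow> \<forall>i\<in>T. c i = 0"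
  shows "vec.dim (vec.span (b ` T)) = card T"
proof -
  have "vec.independent (b ` T)"
    unfolding vec.independent_explicit
  proof (intro conjI allI impI)
    show "finite (b ` T)" using fT by simp
    fix c :: "'a^'k \<Rightarrow> 'a" assume "(\<Sum>v\<in>b ` T. c v *s v) = 0"
    then have "(\<Sum>i\<in>T. (c \<circ> b) i *s b i) = 0" by (simp add: sum.reindex[OF inj])
    then show "\<forall>v\<in>b ` T. c v = 0" using ind[of "c \<circ> b"] by auto
  qed
  then show ?thesis using card_image[OF inj] by (simp add: vec.dim_eq_card_independent)
qed

lemma tangent_from_basis:
  fixes b :: "'j \<Rightarrow> 'a::field^'k" and M :: "('a^'k) set set"
  assumes fT: "finite T" and cT: "card T = m" and mk: "m \<le> CARD('k) - 1"
    and inj: "inj_on b T"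
    and ind: "\<And>c. (\<Sum>i\<in>T. c i *s b i) = 0 \<Longrightarrow> \<forall>i\<in>T. c i = 0"
    and MPG: "M \<subseteq> PG" and xM: "x \<in> M"
    and xU: "x \<subseteq> vec.span (b ` T)"
    and only: "\<And>c. (\<Sum>i\<in>T. c i *s b i) \<noteq> 0 \<Longrightarrow> proj_point (\<Sum>i\<in>T. c i *s b i) \<in> M
        \<Longrightarrow> proj_point (\<Sum>i\<in>T. c i *s b i) = x"
  shows "\<exists>U. is_tangent (CARD('k) - m) M x U"
proof -
  let ?U = "vec.span (b ` T)"
  have d: "vec.dim ?U = CARD('k) - (CARD('k) - m)"
    using dim_idx[OF fT inj ind] cT mk by simp
  have "{p \<in> M. p \<subseteq> ?U} = {x}"
  proof (intro equalityI subsetI)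
    fix p assume p: "p \<in> {p \<in> M. p \<subseteq> ?U}"
    then obtain z where z: "z \<noteq> 0" "p = proj_point z" using MPG PG_E by blast
    then have "z \<in> ?U" using p in_pp by blast
    then obtain c where c: "z = (\<Sum>i\<in>T. c i *s b i)" using span_idx[OF fT inj] by auto
    show "p \<in> {x}" using only[of c] z c p by auto
  qed (use xM xU in auto)
  then show ?thesis using d unfolding is_tangent_def by blast
qed

lemma graph_basis:
  fixes r :: "'k::finite \<Rightarrow> 'a::field^'k"
  assumes rT: "\<forall>i\<in>T. \<forall>t\<in>T. r i $ t = 0"
  shows "inj_on (\<lambda>i. axis i 1 + r i) T"
    and "\<And>c t. t \<in> T \<Longrightarrow> (\<Sum>i\<in>T. c i *s (axis i 1 + r i)) $ t = c t"
    and "\<And>c t. t \<notin> T \<Longrightarrow> (\<Sum>i\<in>T. c i *s (axis i 1 + r i)) $ t = (\<Sum>i\<in>T. c i * r i $ t)"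
proof -
  show "inj_on (\<lambda>i. axis i 1 + r i) T"
  proof (rule inj_onI)
    fix i j assume ij: "i \<in> T" "j \<in> T" "axis i 1 + r i = axis j 1 + r j"
    have e1: "(axis i 1 + r i) $ i = (1::'a)" using ij(1) rT by simp
    have e2: "(axis j 1 + r j) $ i = (if i = j then (1::'a) else 0)" using ij(1,2) rT by (simp add: ax)
    show "i = j" using e1 e2 ij(3) by (metis zero_neq_one)
  qed
  fix c t
  show "t \<in> T \<Longrightarrow> (\<Sum>i\<in>T. c i *s (axis i 1 + r i)) $ t = c t"
  proof -
    assume t: "t \<in> T"
    have "(\<Sum>i\<in>T. c i *s (axis i 1 + r i)) $ t = (\<Sum>i\<in>T. (if i = t then c i else 0))"
      unfolding sum_component using rT t by (intro sum.cong) (auto simp: ax)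
    also have "\<dots> = c t" using t by (simp add: sum.delta')
    finally show ?thesis .
  qed
  show "t \<notin> T \<Longrightarrow> (\<Sum>i\<in>T. c i *s (axis i 1 + r i)) $ t = (\<Sum>i\<in>T. c i * r i $ t)"
    by (auto simp: sum_component ax distrib_left intro!: sum.cong)
qed


lemma graph_cases:
  fixes r :: "'k::finite \<Rightarrow> 'a::field^'k" and V :: "('a^'k) set set"
  assumes rT: "\<forall>i\<in>T. \<forall>t\<in>T. r i $ t = 0"
    and z: "z = (\<Sum>i\<in>T. c i *s (axis i 1 + r i))" and z0: "z \<noteq> 0"
    and zM: "proj_point z \<in> X_set T \<union> Y_set T V \<union> Z_set T"
  shows "(\<exists>j\<in>T. c j \<noteq> 0 \<and> z = c j *s (axis j 1 + r j) \<and> proj_point z \<in> Y_set T V) \<or>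
    (\<exists>i\<in>T. \<exists>i'\<in>T. i \<noteq> i' \<and> c i \<noteq> 0 \<and> c i' \<noteq> 0 \<and>
       z = c i *s (axis i 1 + r i) + c i' *s (axis i' 1 + r i') \<and> c i *s r i + c i' *s r i' = 0)"
proof -
  have zT: "\<forall>t\<in>T. z$t = c t" using graph_basis(2)[OF rT] z by simp
  have zo: "\<forall>t. t \<notin> T \<longrightarrow> z$t = (\<Sum>i\<in>T. c i * r i $ t)" using graph_basis(3)[OF rT] z by simp
  have fT: "finite T" by simp
  have sT: "supp z \<inter> T = {t\<in>T. c t \<noteq> 0}" using zT by (auto simp: supp_def)
  consider "proj_point z \<in> X_set T" | "proj_point z \<in> Y_set T V" | "proj_point z \<in> Z_set T"
    using zM by blast
  then show ?thesis
  proof cases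
    case 1
    then have "\<forall>t\<in>T. c t = 0" using pt_X[OF z0] sT by auto
    then have "z = 0" unfolding z by (simp add: sum.neutral)
    then show ?thesis using z0 by simp
  next
    case 2
    then have "card (supp z \<inter> T) = 1" by (simp add: Y_set_def supp_pt_pp[OF z0])
    then obtain j where j: "supp z \<inter> T = {j}" by (rule card_1_singletonE)
    then have jT: "j \<in> T" "c j \<noteq> 0" and cz: "\<forall>t\<in>T - {j}. c t = 0" using sT by auto
    have "z = (\<Sum>i\<in>{j}. c i *s (axis i 1 + r i))"
      unfolding z by (rule sum.mono_neutral_right) (use jT cz in auto)
    then show ?thesis using jT 2 by auto
  next
    case 3
    then have c2: "card (supp z) = 2" and sz: "supp z \<subseteq> T" using pt_Z[OF z0] by auto
    then obtain i i' where ii: "supp z = {i, i'}" "i \<noteq> i'" by (meson card_2_iff)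
    then have iT: "i \<in> T" "i' \<in> T" "c i \<noteq> 0" "c i' \<noteq> 0" using sz sT by auto
    have cz: "\<forall>t\<in>T - {i, i'}. c t = 0" using sT ii sz by auto
    have zs: "z = (\<Sum>k\<in>{i, i'}. c k *s (axis k 1 + r k))"
      unfolding z by (rule sum.mono_neutral_right) (use iT cz in auto)
    then have z2: "z = c i *s (axis i 1 + r i) + c i' *s (axis i' 1 + r i')" using ii(2) by simp
    have "(c i *s r i + c i' *s r i') $ t = 0" for t
    proof (cases "t \<in> T")
      case True
      then show ?thesis using rT iT by simp
    next
      case False
      then have "z $ t = 0" using sz by (auto simp: supp_def)
      moreover have "z $ t = (\<Sum>k\<in>T. c k * r k $ t)" using zo False by simp
      moreover have "(\<Sum>k\<in>T. c k * r k $ t) = (\<Sum>k\<in>{i, i'}. c k * r k $ t)"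
        by (rule sum.mono_neutral_right) (use iT cz in auto)
      ultimately show ?thesis using ii(2) by simp
    qed
    then have "c i *s r i + c i' *s r i' = 0" by (simp add: vec_eq_iff)
    then show ?thesis using iT ii z2 by blast
  qed
qed



definition rep :: "('a::field^'k) set \<Rightarrow> 'a^'k" where
  "rep p = (SOME v. v \<noteq> 0 \<and> p = proj_point v)"

lemma rep: "p \<in> PG \<Longrightarrow> rep p \<noteq> 0 \<and> proj_point (rep p) = p"
proof -
  assume "p \<in> PG"
  then have "\<exists>v. v \<noteq> 0 \<and> p = proj_point v" by (rule PG_E)
  then have "rep p \<noteq> 0 \<and> p = proj_point (rep p)" unfolding rep_def by (rule someI_ex)
  then show ?thesis by simp
qed

lemma rep_T: "p \<in> PG \<Longrightarrow> supp_pt p \<inter> T = {} \<Longrightarrow> t \<in> T \<Longrightarrow> rep p $ t = 0"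
  using rep[of p] supp_pt_pp[of "rep p"] by (auto simp: supp_def)

lemma lin2: fixes a b :: "'a::field^'k"
  assumes "c \<noteq> 0" "c *s a + d *s b = 0" shows "a = (- d / c) *s b"
proof -
  have "c * a$t + d * b$t = 0" for t using assms(2) by (metis vector_add_component vector_smult_component zero_index)
  then have "c * a$t = - (d * b$t)" for t by (simp add: eq_neg_iff_add_eq_0)
  then have "a$t = (- d / c) * b$t" for t using assms(1) by (simp add: field_simps)
  then show ?thesis by (simp add: vec_eq_iff)
qed

lemma M_PG: "X_set T \<union> Y_set T V \<union> Z_set T \<subseteq> PG"
  by (auto simp: X_set_def Y_set_def Z_set_def)

lemma graph_ind:
  fixes r :: "'k::finite \<Rightarrow> 'a::field^'k"
  assumes rT: "\<forall>i\<in>T. \<forall>t\<in>T. r i $ t = 0"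
  shows "(\<Sum>i\<in>T. c i *s (axis i 1 + r i)) = 0 \<Longrightarrow> \<forall>i\<in>T. c i = 0"
  using graph_basis(2)[OF rT] by (metis zero_index)


lemma tangent_Y:
  fixes T :: "'k::finite set" and V :: "('a::field^'k) set set"
  assumes cT: "card T = m" and mk: "m \<le> CARD('k) - 1" and fV: "finite V" and cV: "card V = m - 1"
    and VPG: "V \<subseteq> PG" and Vd: "\<forall>v\<in>V. supp_pt v \<inter> T = {}" and xY: "x \<in> Y_set T V"
  shows "\<exists>U. is_tangent (CARD('k) - m) (X_set T \<union> Y_set T V \<union> Z_set T) x U"
proof -
  let ?M = "X_set T \<union> Y_set T V \<union> Z_set T"
  have "x \<in> PG" using xY by (simp add: Y_set_def)
  then obtain y where y: "y \<noteq> 0" "x = proj_point y" using PG_E by blast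
  have "card (supp y \<inter> T) = 1" using xY y by (simp add: Y_set_def supp_pt_pp)
  then obtain j0 where j0: "supp y \<inter> T = {j0}" by (rule card_1_singletonE)
  then have j0T: "j0 \<in> T" and yj0: "y $ j0 \<noteq> 0" and yT: "\<forall>t\<in>T - {j0}. y $ t = 0"
    by (auto simp: supp_def)
  define y' where "y' = (1 / y $ j0) *s y"
  have xy': "x = proj_point y'" unfolding y'_def using y yj0 pp_scale[of "1 / y $ j0" y] by simp
  define u where "u = y' - axis j0 1"
  have uT: "\<forall>t\<in>T. u $ t = 0" using yT yj0 by (auto simp: u_def y'_def ax)
  have y'u: "y' = axis j0 1 + u" by (simp add: u_def)
  have unot: "\<not> (u \<noteq> 0 \<and> proj_point u \<in> V)"
  proof
    assume "u \<noteq> 0 \<and> proj_point u \<in> V"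
    then have "x \<in> {proj_point (v + c *s axis j 1) | v j c. v \<noteq> 0 \<and> proj_point v \<in> V \<and> j \<in> T \<and> c \<noteq> 0}"
      using j0T xy' y'u by (intro CollectI exI[of _ u] exI[of _ j0] exI[of _ "1"]) (simp add: add.commute)
    then show False using xY by (simp add: Y_set_def)
  qed
  have "card (T - {j0}) = card V" using cT cV j0T by simp
  then obtain \<sigma> where \<sigma>: "bij_betw \<sigma> (T - {j0}) V"
    using finite_same_card_bij[of "T - {j0}" V] fV by auto
  define r where "r i = (if i = j0 then u else rep (\<sigma> i))" for i
  have \<sigma>V: "\<sigma> i \<in> V" if "i \<in> T - {j0}" for i using \<sigma> that bij_betwE by blast
  have rT: "\<forall>i\<in>T. \<forall>t\<in>T. r i $ t = 0"
  proof (intro ballI)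
    fix i t assume it: "i \<in> T" "t \<in> T"
    show "r i $ t = 0"
    proof (cases "i = j0")
      case True then show ?thesis using uT it by (simp add: r_def)
    next
      case False
      then have "\<sigma> i \<in> V" using \<sigma>V it by blast
      then have "rep (\<sigma> i) $ t = 0" using rep_T[of "\<sigma> i" T t] VPG Vd it by blast
      then show ?thesis using False by (simp add: r_def)
    qed
  qed
  have rV: "rep (\<sigma> i) \<noteq> 0 \<and> proj_point (rep (\<sigma> i)) = \<sigma> i" if "i \<in> T - {j0}" for i
    using rep \<sigma>V[OF that] VPG by blast
  show ?thesis
  proof (rule tangent_from_basis[where b = "\<lambda>i. axis i 1 + r i" and T = T])
    show "finite T" by simp
    show "card T = m" by fact
    show "m \<le> CARD('k) - 1" by fact
    show "inj_on (\<lambda>i. axis i 1 + r i) T" by (rule graph_basis(1)[OF rT])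
    show "\<forall>i\<in>T. c i = 0" if "(\<Sum>i\<in>T. c i *s (axis i 1 + r i)) = 0" for c
      using graph_ind[OF rT] that by blast
    show "?M \<subseteq> PG" by (rule M_PG)
    show "x \<in> ?M" using xY by blast
    have "y' \<in> vec.span ((\<lambda>i. axis i 1 + r i) ` T)"
      using j0T y'u by (intro vec.span_base) (auto simp: r_def)
    then show "x \<subseteq> vec.span ((\<lambda>i. axis i 1 + r i) ` T)" using xy' pp_sub by blast
  next
    fix c assume z0: "(\<Sum>i\<in>T. c i *s (axis i 1 + r i)) \<noteq> 0"
      and zM: "proj_point (\<Sum>i\<in>T. c i *s (axis i 1 + r i)) \<in> ?M"
    define z where "z = (\<Sum>i\<in>T. c i *s (axis i 1 + r i))"
    have "(\<exists>j\<in>T. c j \<noteq> 0 \<and> z = c j *s (axis j 1 + r j) \<and> proj_point z \<in> Y_set T V) \<or>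
      (\<exists>i\<in>T. \<exists>i'\<in>T. i \<noteq> i' \<and> c i \<noteq> 0 \<and> c i' \<noteq> 0 \<and>
       z = c i *s (axis i 1 + r i) + c i' *s (axis i' 1 + r i') \<and> c i *s r i + c i' *s r i' = 0)"
      by (rule graph_cases[OF rT z_def]) (use z0 zM z_def in auto)
    then show "proj_point z = x"
    proof (elim disjE bexE conjE)
      fix j assume j: "j \<in> T" "c j \<noteq> 0" "z = c j *s (axis j 1 + r j)" "proj_point z \<in> Y_set T V"
      have pz: "proj_point z = proj_point (axis j 1 + r j)" by (simp only: j(3) pp_scale[OF j(2)])
      show "proj_point z = x"
      proof (cases "j = j0")
        case True
        then show ?thesis using pz xy' y'u by (simp add: r_def)
      next
        case False
        then have "proj_point z \<in> {proj_point (v + c *s axis j 1) | v j c. v \<noteq> 0 \<and> proj_point v \<in> V \<and> j \<in> T \<and> c \<noteq> 0}"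
          using pz rV[of j] \<sigma>V[of j] j(1)
          by (intro CollectI exI[of _ "rep (\<sigma> j)"] exI[of _ j] exI[of _ "1"]) (simp add: r_def add.commute)
        then show ?thesis using j(4) unfolding Y_set_def by blast
      qed
    next
      fix i i' assume ii: "i \<in> T" "i' \<in> T" "i \<noteq> i'" "c i \<noteq> 0" "c i' \<noteq> 0"
        "c i *s r i + c i' *s r i' = 0"
      have ii2: "c i' *s r i' + c i *s r i = 0" using ii(6) by (simp add: add.commute)
      have e1: "r i = (- c i' / c i) *s r i'" by (rule lin2[OF ii(4) ii(6)])
      have e2: "r i' = (- c i / c i') *s r i" by (rule lin2[OF ii(5) ii2])
      have False
      proof (cases "i = j0")
        case True
        then have "i' \<in> T - {j0}" using ii by auto
        note i1 = this
        have ur: "u = (- c i' / c i) *s rep (\<sigma> i')" using e1 True i1 by (simp add: r_def)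
        have k: "- c i' / c i \<noteq> 0" using ii(4,5) by simp
        have "u \<noteq> 0" using ur k rV[OF i1] by (simp add: vec.scale_eq_0_iff)
        moreover have "proj_point u \<in> V" by (metis ur pp_scale[OF k] rV[OF i1] \<sigma>V[OF i1])
        ultimately have "u \<noteq> 0 \<and> proj_point u \<in> V" by blast
        then show False using unot by blast
      next
        case False
        note F = False
        show False
        proof (cases "i' = j0")
          case True
          then have "i \<in> T - {j0}" using ii F by auto
          note i1 = this
          have ur: "u = (- c i / c i') *s rep (\<sigma> i)" using e2 True i1 by (simp add: r_def)
          have k: "- c i / c i' \<noteq> 0" using ii(4,5) by simp
          have "u \<noteq> 0" using ur k rV[OF i1] by (simp add: vec.scale_eq_0_iff)
          moreover have "proj_point u \<in> V" by (metis ur pp_scale[OF k] rV[OF i1] \<sigma>V[OF i1])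
          ultimately have "u \<noteq> 0 \<and> proj_point u \<in> V" by blast
          then show False using unot by blast
        next
          case False
          then have i1: "i \<in> T - {j0}" and i2: "i' \<in> T - {j0}" using ii F by auto
          have ri: "r i = rep (\<sigma> i)" "r i' = rep (\<sigma> i')" using F False by (simp_all add: r_def)
          have ur: "rep (\<sigma> i) = (- c i' / c i) *s rep (\<sigma> i')" using e1 by (simp only: ri)
          have k: "- c i' / c i \<noteq> 0" using ii(4,5) by simp
          have "proj_point (rep (\<sigma> i)) = proj_point (rep (\<sigma> i'))" by (simp only: ur pp_scale[OF k])
          then have "\<sigma> i = \<sigma> i'" using rV[OF i1] rV[OF i2] by simp
          then show False using \<sigma> i1 i2 ii(3) unfolding bij_betw_def inj_on_def by blast
        qed
      qed
      then show "proj_point z = x" ..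
    qed
  qed
qed



lemma scal1: "(R::'a::field) \<noteq> 0 \<Longrightarrow> a \<noteq> 0 \<Longrightarrow> c * R + d * ((-1/a) * R) = 0 \<Longrightarrow> d = a * c"
proof -
  assume R: "R \<noteq> 0" and a: "a \<noteq> 0" and e: "c * R + d * ((-1/a) * R) = 0"
  then have "(c - d / a) * R = 0" by (simp add: algebra_simps)
  then have "c - d / a = 0" using R by simp
  then show "d = a * c" using a by (simp add: field_simps)
qed

lemma tangent_Z:
  fixes T :: "'k::finite set" and V :: "('a::field^'k) set set"
  assumes cT: "card T = m" and mk: "m \<le> CARD('k) - 1" and fV: "finite V" and cV: "card V = m - 1"
    and VPG: "V \<subseteq> PG" and Vd: "\<forall>v\<in>V. supp_pt v \<inter> T = {}" and xZ: "x \<in> Z_set T"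
  shows "\<exists>U. is_tangent (CARD('k) - m) (X_set T \<union> Y_set T V \<union> Z_set T) x U"
proof -
  let ?M = "X_set T \<union> Y_set T V \<union> Z_set T"
  have "x \<in> PG" using xZ by (simp add: Z_set_def)
  then obtain y where y: "y \<noteq> 0" "x = proj_point y" using PG_E by blast
  have "card (supp y) = 2" "supp y \<subseteq> T" using xZ y pt_Z by auto
  then obtain j j' where jj: "supp y = {j, j'}" "j \<noteq> j'" "j \<in> T" "j' \<in> T" by (metis card_2_iff insert_subset)
  then have yj: "y $ j \<noteq> 0" "y $ j' \<noteq> 0" and yo: "\<forall>t. t \<noteq> j \<and> t \<noteq> j' \<longrightarrow> y $ t = 0"
    by (auto simp: supp_def)
  define a where "a = y $ j' / y $ j"
  have a0: "a \<noteq> 0" using yj by (simp add: a_def)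
  define y' where "y' = (1 / y $ j) *s y"
  have xy': "x = proj_point y'" unfolding y'_def using y yj pp_scale[of "1 / y $ j" y] by simp
  have y'e: "y' = axis j 1 + a *s axis j' 1"
    using yj yo jj(2) by (auto simp: vec_eq_iff y'_def a_def ax)
  have "card (T - {j'}) = card V" using cT cV jj by simp
  then obtain \<sigma> where \<sigma>: "bij_betw \<sigma> (T - {j'}) V"
    using finite_same_card_bij[of "T - {j'}" V] fV by auto
  define \<tau> where "\<tau> i = (if i = j' then j else i)" for i
  define s where "s i = (if i = j' then -1/a else 1)" for i
  define r where "r i = s i *s rep (\<sigma> (\<tau> i))" for i
  have \<tau>T: "\<tau> i \<in> T - {j'}" if "i \<in> T" for i using that jj by (auto simp: \<tau>_def)
  have s0: "s i \<noteq> 0" for i using a0 by (simp add: s_def)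
  have \<sigma>V: "\<sigma> i \<in> V" if "i \<in> T - {j'}" for i using \<sigma> that bij_betwE by blast
  have repV: "rep (\<sigma> (\<tau> i)) \<noteq> 0 \<and> proj_point (rep (\<sigma> (\<tau> i))) = \<sigma> (\<tau> i)" if "i \<in> T" for i
    using rep \<sigma>V[OF \<tau>T[OF that]] VPG by blast
  have rV: "r i \<noteq> 0 \<and> proj_point (r i) = \<sigma> (\<tau> i) \<and> \<sigma> (\<tau> i) \<in> V" if "i \<in> T" for i
  proof -
    have "r i \<noteq> 0" using repV[OF that] s0[of i] by (simp add: r_def vec.scale_eq_0_iff)
    moreover have "proj_point (r i) = \<sigma> (\<tau> i)" unfolding r_def
      by (metis repV[OF that] pp_scale[OF s0[of i]])
    ultimately show ?thesis using \<sigma>V[OF \<tau>T[OF that]] by blast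
  qed
  have rT: "\<forall>i\<in>T. \<forall>t\<in>T. r i $ t = 0"
  proof (intro ballI)
    fix i t assume it: "i \<in> T" "t \<in> T"
    have "rep (\<sigma> (\<tau> i)) $ t = 0" using rep_T[of "\<sigma> (\<tau> i)" T t] \<sigma>V[OF \<tau>T[OF it(1)]] VPG Vd it by blast
    then show "r i $ t = 0" by (simp add: r_def)
  qed
  have rj: "r j = rep (\<sigma> j)" "r j' = (-1/a) *s rep (\<sigma> j)"
    using jj(2) by (simp_all add: r_def s_def \<tau>_def)
  show ?thesis
  proof (rule tangent_from_basis[where b = "\<lambda>i. axis i 1 + r i" and T = T])
    show "finite T" by simp
    show "card T = m" by fact
    show "m \<le> CARD('k) - 1" by fact
    show "inj_on (\<lambda>i. axis i 1 + r i) T" by (rule graph_basis(1)[OF rT])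
    show "\<forall>i\<in>T. c i = 0" if "(\<Sum>i\<in>T. c i *s (axis i 1 + r i)) = 0" for c
      using graph_ind[OF rT] that by blast
    show "?M \<subseteq> PG" by (rule M_PG)
    show "x \<in> ?M" using xZ by blast
    have "y' = (axis j 1 + r j) + a *s (axis j' 1 + r j')"
      using a0 by (simp add: y'e rj vec_eq_iff ring_distribs)
    moreover have "(axis j 1 + r j) + a *s (axis j' 1 + r j') \<in> vec.span ((\<lambda>i. axis i 1 + r i) ` T)"
      using jj by (intro vec.span_add vec.span_scale vec.span_base) auto
    ultimately show "x \<subseteq> vec.span ((\<lambda>i. axis i 1 + r i) ` T)" using xy' pp_sub[OF vec.subspace_span] by metis
  next
    fix c assume z0: "(\<Sum>i\<in>T. c i *s (axis i 1 + r i)) \<noteq> 0"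
      and zM: "proj_point (\<Sum>i\<in>T. c i *s (axis i 1 + r i)) \<in> ?M"
    define z where "z = (\<Sum>i\<in>T. c i *s (axis i 1 + r i))"
    have "(\<exists>j\<in>T. c j \<noteq> 0 \<and> z = c j *s (axis j 1 + r j) \<and> proj_point z \<in> Y_set T V) \<or>
      (\<exists>i\<in>T. \<exists>i'\<in>T. i \<noteq> i' \<and> c i \<noteq> 0 \<and> c i' \<noteq> 0 \<and>
       z = c i *s (axis i 1 + r i) + c i' *s (axis i' 1 + r i') \<and> c i *s r i + c i' *s r i' = 0)"
      by (rule graph_cases[OF rT z_def]) (use z0 zM z_def in auto)
    then show "proj_point z = x"
    proof (elim disjE bexE conjE)
      fix i assume i: "i \<in> T" "c i \<noteq> 0" "z = c i *s (axis i 1 + r i)" "proj_point z \<in> Y_set T V"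
      have pz: "proj_point z = proj_point (axis i 1 + r i)" by (simp only: i(3) pp_scale[OF i(2)])
      have "proj_point z \<in> {proj_point (v + c *s axis j 1) | v j c. v \<noteq> 0 \<and> proj_point v \<in> V \<and> j \<in> T \<and> c \<noteq> 0}"
        using pz rV[OF i(1)] i(1)
        by (intro CollectI exI[of _ "r i"] exI[of _ i] exI[of _ "1"]) (simp add: add.commute)
      then show "proj_point z = x" using i(4) by (simp add: Y_set_def)
    next
      fix i i2 assume ii: "i \<in> T" "i2 \<in> T" "i \<noteq> i2" "c i \<noteq> 0" "c i2 \<noteq> 0"
        "z = c i *s (axis i 1 + r i) + c i2 *s (axis i2 1 + r i2)" "c i *s r i + c i2 *s r i2 = 0"
      have e1: "r i = (- c i2 / c i) *s r i2" by (rule lin2[OF ii(4) ii(7)])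
      have k: "- c i2 / c i \<noteq> 0" using ii(4,5) by simp
      have "proj_point (r i) = proj_point (r i2)" by (simp only: e1 pp_scale[OF k])
      then have "\<sigma> (\<tau> i) = \<sigma> (\<tau> i2)" using rV[OF ii(1)] rV[OF ii(2)] by simp
      then have "\<tau> i = \<tau> i2" using \<sigma> \<tau>T[OF ii(1)] \<tau>T[OF ii(2)] unfolding bij_betw_def inj_on_def by blast
      then have ij: "(i = j \<and> i2 = j') \<or> (i = j' \<and> i2 = j)" using ii(3) by (auto simp: \<tau>_def split: if_splits)
      have zz: "z = c i *s axis i 1 + c i2 *s axis i2 1 + (c i *s r i + c i2 *s r i2)"
        using ii(6) by (simp add: vec_eq_iff ring_distribs add_ac)
      have zz2: "z = c j *s axis j 1 + c j' *s axis j' 1" and ee: "c j *s r j + c j' *s r j' = 0"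
        using ij zz ii(7) by (auto simp: add.commute)
      obtain t where t: "rep (\<sigma> j) $ t \<noteq> 0" using repV[OF jj(3)] jj(2)
        by (metis (full_types) \<tau>_def vec_eq_iff zero_index)
      have "c j * rep (\<sigma> j) $ t + c j' * ((-1/a) * rep (\<sigma> j) $ t) = 0"
        using arg_cong[OF ee, of "\<lambda>v. v $ t"] by (simp add: rj)
      then have cj: "c j' = a * c j" by (rule scal1[OF t a0])
      have cj0: "c j \<noteq> 0" using ij ii(4,5) by auto
      have "z = c j *s y'" using zz2 cj by (simp add: y'e vec_eq_iff ring_distribs)
      then show "proj_point z = x" using xy' pp_scale[OF cj0] by simp
    qed
  qed
qed



lemma card_zero_on:
  fixes A :: "'k::finite set"
  shows "card {d::('a::{zero,finite})^'k. \<forall>t\<in>A. d$t = 0} = CARD('a) ^ card (- A)"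
proof -
  let ?D = "{d::'a^'k. \<forall>t\<in>A. d$t = 0}"
  have "bij_betw (\<lambda>d. restrict (vec_nth d) (- A)) ?D (PiE (- A) (\<lambda>_. UNIV))"
  proof (rule bij_betw_byWitness[where f' = "\<lambda>h. \<chi> i. if i \<in> A then 0 else h i"])
    show "\<forall>a\<in>?D. (\<chi> i. if i \<in> A then 0 else restrict (vec_nth a) (- A) i) = a"
      by (auto simp: vec_eq_iff)
    show "\<forall>a'\<in>PiE (- A) (\<lambda>_. UNIV). restrict (vec_nth (\<chi> i. if i \<in> A then 0 else a' i)) (- A) = a'"
      by (auto simp: PiE_def extensional_def fun_eq_iff)
    show "(\<lambda>d. restrict (vec_nth d) (- A)) ` ?D \<subseteq> PiE (- A) (\<lambda>_. UNIV)" by auto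
    show "(\<lambda>h. \<chi> i. if i \<in> A then 0 else h i) ` PiE (- A) (\<lambda>_. UNIV) \<subseteq> ?D" by auto
  qed
  then have "card ?D = card (PiE (- A) (\<lambda>_. (UNIV::'a set)))" by (rule bij_betw_same_card)
  also have "\<dots> = CARD('a) ^ card (- A)" by (simp add: card_PiE)
  finally show ?thesis .
qed


lemma tangent_X:
  fixes T :: "'k::finite set" and V :: "('a::{field,finite}^'k) set set"
  assumes cT: "card T = m" and m1: "1 \<le> m" and mk: "m \<le> CARD('k) - 1"
    and q: "m \<le> CARD('a) ^ (CARD('k) - m - 1)" and xX: "x \<in> X_set T"
  shows "\<exists>U. is_tangent (CARD('k) - m) (X_set T \<union> Y_set T V \<union> Z_set T) x U"
proof -
  let ?M = "X_set T \<union> Y_set T V \<union> Z_set T"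
  have "x \<in> PG" using xX by (simp add: X_set_def)
  then obtain u where u: "u \<noteq> 0" "x = proj_point u" using PG_E by blast
  have uT: "\<forall>t\<in>T. u $ t = 0" using xX u pt_X[OF u(1)] by (auto simp: supp_def)
  obtain l where l: "u $ l \<noteq> 0" using u(1) by (metis vec_eq_iff zero_index)
  have lT: "l \<notin> T" using l uT by auto
  have "T \<noteq> {}" using cT m1 by auto
  then obtain j0 where j0: "j0 \<in> T" by blast
  define D where "D = {d::'a^'k. \<forall>t\<in>insert l T. d$t = 0}"
  have "card (- insert l T) = CARD('k) - m - 1"
  proof -
    have "- insert l T = UNIV - insert l T" by auto
    then have "card (- insert l T) = CARD('k) - card (insert l T)"
      by (simp add: card_Diff_subset)
    then show ?thesis using lT cT by simp
  qed
  then have cD: "card D = CARD('a) ^ (CARD('k) - m - 1)" unfolding D_def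
    using card_zero_on[of "insert l T", where 'a='a] by metis
  have "card T \<le> card D" using q cT cD by simp
  then obtain d0 where d0: "inj_on d0 T" "d0 ` T \<subseteq> D" using card_le_inj[of T D] by auto
  define d where "d i = d0 i - d0 j0" for i
  have dD: "\<forall>t\<in>insert l T. d i $ t = 0" if "i \<in> T" for i
  proof
    fix t assume t: "t \<in> insert l T"
    have "d0 i \<in> D" "d0 j0 \<in> D" using d0(2) that j0 by auto
    then have "d0 i $ t = 0" "d0 j0 $ t = 0" using t unfolding D_def by blast+
    then show "d i $ t = 0" by (simp add: d_def)
  qed
  have dj0: "d j0 = 0" by (simp add: d_def)
  have dinj: "inj_on d T" using d0(1) unfolding inj_on_def d_def by simp
  define T' where "T' = T - {j0}"
  define b where "b i = (if i = j0 then u else axis i 1 - axis j0 1 + d i)" for i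
  have fT: "finite T" by simp
  have comp: "(\<Sum>i\<in>T. c i *s b i) $ t = c j0 * u $ t + (\<Sum>i\<in>T'. c i * (axis i 1 $ t - axis j0 1 $ t + d i $ t))"
    for c t
  proof -
    have "(\<Sum>i\<in>T. c i *s b i) = c j0 *s b j0 + (\<Sum>i\<in>T'. c i *s b i)"
      unfolding T'_def using j0 by (simp add: sum.remove)
    also have "(\<Sum>i\<in>T'. c i *s b i) = (\<Sum>i\<in>T'. c i *s (axis i 1 - axis j0 1 + d i))"
      by (rule sum.cong) (auto simp: b_def T'_def)
    finally show ?thesis by (simp add: b_def sum_component ring_distribs)
  qed
  have Z1: "(\<Sum>i\<in>T. c i *s b i) $ t = c t" if t: "t \<in> T'" for c t
  proof -
    have "t \<noteq> j0" "t \<in> T" using t by (auto simp: T'_def)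
    then have "(\<Sum>i\<in>T'. c i * (axis i 1 $ t - axis j0 1 $ t + d i $ t)) = (\<Sum>i\<in>T'. if i = t then c i else 0)"
      using dD by (intro sum.cong) (auto simp: ax T'_def)
    also have "\<dots> = c t" using t by (simp add: sum.delta')
    finally show ?thesis using comp uT \<open>t \<in> T\<close> by simp
  qed
  have Z2: "(\<Sum>i\<in>T. c i *s b i) $ j0 = - (\<Sum>i\<in>T'. c i)" for c
  proof -
    have "(\<Sum>i\<in>T'. c i * (axis i 1 $ j0 - axis j0 1 $ j0 + d i $ j0)) = (\<Sum>i\<in>T'. - c i)"
      using dD j0 by (intro sum.cong) (auto simp: ax T'_def)
    then show ?thesis using comp uT j0 by (simp add: sum_negf)
  qed
  have Z4: "(\<Sum>i\<in>T. c i *s b i) $ t = c j0 * u $ t + (\<Sum>i\<in>T'. c i * d i $ t)" if t: "t \<notin> T" for c t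
  proof -
    have "(\<Sum>i\<in>T'. c i * (axis i 1 $ t - axis j0 1 $ t + d i $ t)) = (\<Sum>i\<in>T'. c i * d i $ t)"
      using t j0 by (intro sum.cong) (auto simp: ax T'_def)
    then show ?thesis using comp by simp
  qed
  have Z3: "(\<Sum>i\<in>T. c i *s b i) $ l = c j0 * u $ l" for c
  proof -
    have "(\<Sum>i\<in>T'. c i * d i $ l) = 0" using dD by (intro sum.neutral) (auto simp: T'_def)
    then show ?thesis using Z4[OF lT] by simp
  qed
  have onlyu: "(\<Sum>i\<in>T. c i *s b i) = c j0 *s u" if "\<forall>t\<in>T'. c t = 0" for c
  proof -
    have "(\<Sum>i\<in>T. c i *s b i) = c j0 *s b j0 + (\<Sum>i\<in>T'. c i *s b i)"
      unfolding T'_def using j0 by (simp add: sum.remove)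
    then show ?thesis using that by (simp add: b_def)
  qed
  show ?thesis
  proof (rule tangent_from_basis[where b = b and T = T])
    show "finite T" by simp
    show "card T = m" by fact
    show "m \<le> CARD('k) - 1" by fact
    show "inj_on b T"
    proof (rule inj_onI)
      fix i i' assume ii: "i \<in> T" "i' \<in> T" "b i = b i'"
      show "i = i'"
      proof (rule ccontr)
        assume ne: "i \<noteq> i'"
        show False
        proof (cases "i = j0")
          case True
          then have "i' \<noteq> j0" using ne by simp
          then have "b i' $ i' = 1" using dD[OF ii(2)] ii(2) by (simp add: b_def ax)
          moreover have "b i $ i' = 0" using True uT ii(2) by (simp add: b_def)
          ultimately show False using ii(3) by simp
        next
          case False
          then have "b i $ i = 1" using dD[OF ii(1)] ii(1) by (simp add: b_def ax)
          moreover have "b i' $ i = 0"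
          proof (cases "i' = j0")
            case True then show ?thesis using uT ii(1) by (simp add: b_def)
          next
            case F2: False then show ?thesis using dD[OF ii(2)] ii(1) ne False by (simp add: b_def ax)
          qed
          ultimately show False using ii(3) by simp
        qed
      qed
    qed
    show "\<forall>i\<in>T. c i = 0" if z: "(\<Sum>i\<in>T. c i *s b i) = 0" for c
    proof -
      have "\<forall>t\<in>T'. c t = 0" using Z1[of _ c] z by simp
      moreover then have "c j0 = 0" using Z3[of c] z l by simp
      ultimately show ?thesis by (auto simp: T'_def)
    qed
    show "?M \<subseteq> PG" by (rule M_PG)
    show "x \<in> ?M" using xX by blast
    have "u \<in> vec.span (b ` T)" using j0 by (intro vec.span_base) (auto simp: b_def intro!: image_eqI[of _ _ j0])
    then show "x \<subseteq> vec.span (b ` T)" using u pp_sub[OF vec.subspace_span] by metis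
  next
    fix c assume z0: "(\<Sum>i\<in>T. c i *s b i) \<noteq> 0"
      and zM: "proj_point (\<Sum>i\<in>T. c i *s b i) \<in> ?M"
    define z where "z = (\<Sum>i\<in>T. c i *s b i)"
    show "proj_point z = x"
    proof (cases "\<forall>t\<in>T'. c t = 0")
      case True
      then have zu: "z = c j0 *s u" unfolding z_def by (rule onlyu)
      then have "c j0 \<noteq> 0" using z0 z_def by auto
      then show ?thesis using zu u pp_scale by simp
    next
      case False
      then obtain i where i: "i \<in> T'" "c i \<noteq> 0" by blast
      have iT: "i \<in> T" "i \<noteq> j0" using i by (auto simp: T'_def)
      have zi: "z $ i \<noteq> 0" using Z1[OF i(1)] i(2) z_def by simp
      have zz0: "z \<noteq> 0" using z0 z_def by simp
      consider "proj_point z \<in> X_set T" | "proj_point z \<in> Y_set T V" | "proj_point z \<in> Z_set T"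
        using zM z_def by blast
      then have False
      proof cases
        case 1
        then show False using pt_X[OF zz0] zi iT by (auto simp: supp_def)
      next
        case 2
        then have "card (supp z \<inter> T) = 1" by (simp add: Y_set_def supp_pt_pp[OF zz0])
        then obtain j where j: "supp z \<inter> T = {j}" by (rule card_1_singletonE)
        then have jeq: "j = i" using zi iT by (auto simp: supp_def)
        have c0: "\<forall>t\<in>T' - {i}. c t = 0"
        proof
          fix t assume t: "t \<in> T' - {i}"
          then have "z $ t = 0" using j jeq by (auto simp: supp_def T'_def)
          then show "c t = 0" using Z1[of t c] t z_def by simp
        qed
        have "z $ j0 = 0" using j jeq iT j0 by (auto simp: supp_def)
        then have "(\<Sum>i\<in>T'. c i) = 0" using Z2[of c] z_def by simp
        moreover have "(\<Sum>i\<in>T'. c i) = (\<Sum>i\<in>{i}. c i)"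
          by (rule sum.mono_neutral_right) (use i c0 in \<open>auto simp: T'_def\<close>)
        ultimately show False using i by simp
      next
        case 3
        then have c2: "card (supp z) = 2" and sz: "supp z \<subseteq> T" using pt_Z[OF zz0] by auto
        have "z $ l = 0" using sz lT by (auto simp: supp_def)
        then have cj0: "c j0 = 0" using Z3[of c] z_def l by simp
        have W: "(\<Sum>k\<in>T'. c k *s d k) = 0"
        proof -
          have "(\<Sum>k\<in>T'. c k *s d k) $ t = 0" for t
          proof (cases "t \<in> insert l T")
            case True
            then show ?thesis using dD by (auto simp: sum_component T'_def intro!: sum.neutral)
          next
            case False
            then have "z $ t = 0" using sz by (auto simp: supp_def)
            then show ?thesis using Z4[of t c] False cj0 z_def by (simp add: sum_component)
          qed
          then show ?thesis by (simp add: vec_eq_iff)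
        qed
        have "i \<in> supp z" using zi by (simp add: supp_def)
        then obtain i2 where i2: "supp z = {i, i2}" "i \<noteq> i2"
          using c2 by (metis card_2_iff doubleton_eq_iff insertE singletonD)
        have zo: "\<forall>t\<in>T. t \<noteq> i \<and> t \<noteq> i2 \<longrightarrow> z $ t = 0" using i2 by (auto simp: supp_def)
        show False
        proof (cases "i2 = j0")
          case True
          have c0: "\<forall>t\<in>T' - {i}. c t = 0"
          proof
            fix t assume t: "t \<in> T' - {i}"
            then have "z $ t = 0" using zo True by (auto simp: T'_def)
            then show "c t = 0" using Z1[of t c] t z_def by simp
          qed
          have "(\<Sum>k\<in>T'. c k *s d k) = (\<Sum>k\<in>{i}. c k *s d k)"
            by (rule sum.mono_neutral_right) (use i c0 in \<open>auto simp: T'_def\<close>)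
          then have "d i = 0" using W i(2) by (simp add: vec.scale_eq_0_iff)
          then have "d i = d j0" using dj0 by simp
          then show False using dinj iT j0 unfolding inj_on_def by blast
        next
          case False
          have i2T: "i2 \<in> T'" using i2 sz False by (auto simp: T'_def)
          have c0: "\<forall>t\<in>T' - {i, i2}. c t = 0"
          proof
            fix t assume t: "t \<in> T' - {i, i2}"
            then have "z $ t = 0" using zo by (auto simp: T'_def)
            then show "c t = 0" using Z1[of t c] t z_def by simp
          qed
          have "z $ j0 = 0" using zo j0 iT False by auto
          then have "(\<Sum>k\<in>T'. c k) = 0" using Z2[of c] z_def by simp
          moreover have "(\<Sum>k\<in>T'. c k) = (\<Sum>k\<in>{i, i2}. c k)"
            by (rule sum.mono_neutral_right) (use i i2T c0 in \<open>auto simp: T'_def\<close>)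
          ultimately have cs: "c i2 = - c i" using i2(2) by (simp add: add_eq_0_iff)
          have "(\<Sum>k\<in>T'. c k *s d k) = (\<Sum>k\<in>{i, i2}. c k *s d k)"
            by (rule sum.mono_neutral_right) (use i i2T c0 in \<open>auto simp: T'_def\<close>)
          then have "c i *s d i + c i2 *s d i2 = 0" using W i2(2) by simp
          then have "c i *s (d i - d i2) = 0" using cs by (simp add: vec.scale_right_diff_distrib)
          then have "d i = d i2" using i(2) by (simp add: vec.scale_eq_0_iff)
          then show False using dinj iT i2T i2(2) unfolding inj_on_def T'_def by blast
        qed
      qed
      then show ?thesis ..
    qed
  qed
qed


theorem mainTheorem17:
  fixes T :: "'k::finite set"
    and V :: "(('a::{field,finite})^'k) set set"
    and m :: nat
  assumes "1 \<le> m" and "m \<le> CARD('k) - 1"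
    and "card T = m"
    and "V \<subseteq> PG" and "card V = m - 1"
    and "\<forall>v\<in>V. supp_pt v \<inter> T = {}"
    and "m \<le> CARD('a) ^ (CARD('k) - m - 1)"
  shows "is_minimal_r_block (CARD('k) - m) (X_set T \<union> Y_set T V \<union> Z_set T)"
proof -
  have fV: "finite V" by (rule finite_subset[OF subset_UNIV]) simp
  have blk: "\<exists>p\<in>X_set T \<union> Y_set T V \<union> Z_set T. p \<subseteq> U"
    if "vec.subspace U" "vec.dim U = CARD('k) - (CARD('k) - m)" for U
  proof -
    have "vec.dim U = m" using that(2) assms(2) by simp
    then show ?thesis using block[OF assms(3) assms(1) fV assms(5) assms(6) that(1)] by blast
  qed
  have tan: "\<exists>U. is_tangent (CARD('k) - m) (X_set T \<union> Y_set T V \<union> Z_set T) x U"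
    if xM: "x \<in> X_set T \<union> Y_set T V \<union> Z_set T" for x
  proof -
    consider "x \<in> X_set T" | "x \<in> Y_set T V" | "x \<in> Z_set T" using xM by blast
    then show ?thesis
    proof cases
      case 1 then show ?thesis using tangent_X[OF assms(3) assms(1) assms(2) assms(7)] by blast
    next
      case 2 then show ?thesis using tangent_Y[OF assms(3) assms(2) fV assms(5) assms(4) assms(6)] by blast
    next
      case 3 then show ?thesis using tangent_Z[OF assms(3) assms(2) fV assms(5) assms(4) assms(6)] by blast
    qed
  qed
  show ?thesis
    unfolding is_minimal_r_block_def is_r_block_def
  proof (intro conjI allI impI ballI)
    show "X_set T \<union> Y_set T V \<union> Z_set T \<subseteq> PG" by (rule M_PG)
    show "1 \<le> CARD('k) - m" using assms(1,2) by arith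
    show "CARD('k) - m \<le> CARD('k) - 1" using assms(1) by simp
    fix U :: "('a^'k) set" assume "vec.subspace U \<and> vec.dim U = CARD('k) - (CARD('k) - m)"
    then show "\<exists>p\<in>X_set T \<union> Y_set T V \<union> Z_set T. p \<subseteq> U" using blk by blast
  next
    fix x assume "x \<in> X_set T \<union> Y_set T V \<union> Z_set T"
    then show "\<exists>U. is_tangent (CARD('k) - m) (X_set T \<union> Y_set T V \<union> Z_set T) x U" by (rule tan)
  qed
qed

end
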